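(* Let $b\in\mathcal B$ and let $R$ be the multiset of zeros in $\mathbb C^*$ of the Laurent polynomial $1-bb^*$. Then: (a) $\pi_2^{-1}(b)\subseteq\mathcal S$ is finite and $|\pi_2^{-1}(b)|=\mathcal N(R)$; (b) if $(a,b),(a',b)\in\pi_2^{-1}(b)$, then $a\ne a'$ if and only if the multisets of zeros of $a^*$ and $(a')^*$ differ; moreover $a$ and $a'$ have the same zeros on $\mathbb T$ counted with multiplicity; (c) if $a$ is a polynomial with $a(0)\ne0$ and zero multiset $R_a$, then $(a^*,b)\in\pi_2^{-1}(b)$ implies $R=\bigcup_{\alpha\in R_a}\{\alpha,1/\overline\alpha\}$ as multisets; conversely, if $R=\bigcup_{\alpha\in R_a}\{\alpha,1/\overline\alpha\}$ then there is a unique $\lambda\in\mathbb C^*$ with $(\lambda a^*,b)\in\pi_2^{-1}(b)$.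
   Context: $\mathbb T$ is the unit circle, $\mathbb C^*=\mathbb C\setminus\{0\}$, $a^*(z):=\overline{a(1/\overline z)}$ for a Laurent polynomial $a$. $\mathcal S$ is the set of pairs $(a,b)$ of Laurent polynomials with $aa^*+bb^*=1$ and $0<a^*(0)<\infty$; $\pi_1(a,b)=a$, $\pi_2(a,b)=b$, $\mathcal A:=\pi_1(\mathcal S)$, $\mathcal B:=\pi_2(\mathcal S)$. Multiset unions add multiplicities. Counting function: for a finite multiset $R\subset\mathbb C^*$, define $\alpha\sim\beta$ iff $\alpha=\beta$ or $\alpha=1/\overline\beta$ (equivalence classes taken as multisets, all of even size in the cases considered); for a class $y$ let $\sharp(y):=1$ if $y$ meets $\mathbb T$ and $\sharp(y):=1+|y|/2$ otherwise; $\mathcal N(R):=\prod_{y\in R/\sim}\sharp(y)$. *)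

theory Defs
  imports "HOL-Analysis.Analysis" "HOL-Computational_Algebra.Polynomial" "HOL-Library.Multiset"
begin

text \<open>Laurent polynomials over the complex numbers are represented by their coefficient
  functions c :: int => complex (the Laurent polynomial is the sum of c n * z powi n),
  required to have finite support.\<close>

type_synonym laurent = "int \<Rightarrow> complex"

definition lsupp :: "laurent \<Rightarrow> int set" where
  "lsupp f = {n. f n \<noteq> 0}"

definition is_laurent :: "laurent \<Rightarrow> bool" where
  "is_laurent f \<longleftrightarrow> finite (lsupp f)"

definition leval :: "laurent \<Rightarrow> complex \<Rightarrow> complex" where
  "leval f z = (\<Sum>n\<in>lsupp f. f n * z powi n)"

definition lone :: laurent where
  "lone n = (if n = 0 then 1 else 0)"

definition lmult :: "laurent \<Rightarrow> laurent \<Rightarrow> laurent" where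
  "lmult f g n = (\<Sum>k\<in>lsupp f. f k * g (n - k))"

text \<open>a^*(z) = conj (a (1 / conj z)):  if a = sum a_n z^n then a^* = sum conj(a_n) z^(-n).\<close>
definition lstar :: "laurent \<Rightarrow> laurent" where
  "lstar f n = cnj (f (- n))"

text \<open>0 < f(0) < infinity: f has no negative powers (so f(0) is finite and equals the
  constant coefficient) and the constant coefficient is a positive real.\<close>
definition val0_pos :: "laurent \<Rightarrow> bool" where
  "val0_pos f \<longleftrightarrow> (\<forall>n<0. f n = 0) \<and> f 0 \<in> \<real> \<and> 0 < Re (f 0)"

definition SS :: "(laurent \<times> laurent) set" where
  "SS = {(a, b). is_laurent a \<and> is_laurent b \<and>
                 (\<lambda>n. lmult a (lstar a) n + lmult b (lstar b) n) = lone \<and>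
                 val0_pos (lstar a)}"

definition BB :: "laurent set" where
  "BB = snd ` SS"

definition fibre2 :: "laurent \<Rightarrow> (laurent \<times> laurent) set" where
  "fibre2 b = {p \<in> SS. snd p = b}"

text \<open>Zeros in C* of a Laurent polynomial f = z^m p(z) (p(0) /= 0), counted with
  multiplicity: the roots of the polynomial p.\<close>
definition ldeg :: "laurent \<Rightarrow> int" where
  "ldeg f = Min (lsupp f)"

definition hdeg :: "laurent \<Rightarrow> int" where
  "hdeg f = Max (lsupp f)"

definition lpoly :: "laurent \<Rightarrow> complex poly" where
  "lpoly f = (if lsupp f = {} then 0 else
     Poly (map (\<lambda>i. f (ldeg f + int i)) [0..<nat (hdeg f - ldeg f) + 1]))"

definition lzeros :: "laurent \<Rightarrow> complex multiset" where
  "lzeros f = filter_mset (\<lambda>z. z \<noteq> 0) (proots (lpoly f))"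

definition poly_to_laurent :: "complex poly \<Rightarrow> laurent" where
  "poly_to_laurent p n = (if 0 \<le> n then coeff p (nat n) else 0)"

definition lsmult :: "complex \<Rightarrow> laurent \<Rightarrow> laurent" where
  "lsmult c f n = c * f n"

definition lminus :: "laurent \<Rightarrow> laurent \<Rightarrow> laurent" where
  "lminus f g n = f n - g n"

text \<open>The class of alpha under alpha ~ beta iff alpha = beta or
  alpha = 1/conj beta has underlying set {alpha, 1/conj alpha}; its size (as a multiset)
  is the sum of the multiplicities in R of its distinct elements.\<close>
definition rclass :: "complex \<Rightarrow> complex set" where
  "rclass \<alpha> = {\<alpha>, 1 / cnj \<alpha>}"

definition class_size :: "complex multiset \<Rightarrow> complex set \<Rightarrow> nat" where
  "class_size R y = (\<Sum>x\<in>y. count R x)"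

definition sharp :: "complex multiset \<Rightarrow> complex set \<Rightarrow> nat" where
  "sharp R y = (if (\<exists>x\<in>y. cmod x = 1) then 1 else 1 + class_size R y div 2)"

definition NN :: "complex multiset \<Rightarrow> nat" where
  "NN R = (\<Prod>y\<in>rclass ` set_mset R. sharp R y)"

end

theory Submission
  imports Defs "HOL-Computational_Algebra.Fundamental_Theorem_Algebra"
begin

definition shiftL :: "int \<Rightarrow> complex poly \<Rightarrow> laurent" where
  "shiftL m F n = (if m \<le> n then coeff F (nat (n - m)) else 0)"

definition refl :: "complex poly \<Rightarrow> complex poly" where
  "refl P = reflect_poly (map_poly cnj P)"

lemma lmult_superset:
  assumes "finite A" "lsupp f \<subseteq> A"
  shows "lmult f g n = (\<Sum>j\<in>A. f j * g (n - j))"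
  unfolding lmult_def
  by (rule sum.mono_neutral_left[OF assms(1) assms(2)]) (auto simp: lsupp_def)

lemma lsupp_shiftL: "lsupp (shiftL m F) \<subseteq> (\<lambda>i. m + int i) ` {..degree F}"
proof
  fix j assume "j \<in> lsupp (shiftL m F)"
  then have h: "m \<le> j" "coeff F (nat (j - m)) \<noteq> 0" by (auto simp: lsupp_def shiftL_def split: if_splits)
  then have "nat (j - m) \<le> degree F" using le_degree by blast
  moreover have "j = m + int (nat (j - m))" using h by simp
  ultimately show "j \<in> (\<lambda>i. m + int i) ` {..degree F}" by blast
qed

lemma is_laurent_shiftL: "is_laurent (shiftL m F)"
  unfolding is_laurent_def by (rule finite_subset[OF lsupp_shiftL]) auto

lemma lmult_shiftL: "lmult (shiftL m F) (shiftL k G) = shiftL (m + k) (F * G)"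
proof
  fix n
  define d where "d = degree F"
  have "lmult (shiftL m F) (shiftL k G) n =
        (\<Sum>j\<in>(\<lambda>i. m + int i) ` {..d}. shiftL m F j * shiftL k G (n - j))"
    using lsupp_shiftL[of m F] by (intro lmult_superset) (auto simp: d_def)
  also have "\<dots> = (\<Sum>i\<le>d. coeff F i * shiftL k G (n - m - int i))"
    by (subst sum.reindex) (auto simp: inj_on_def shiftL_def algebra_simps)
  also have "\<dots> = shiftL (m + k) (F * G) n"
  proof (cases "m + k \<le> n")
    case False
    then show ?thesis by (auto simp: shiftL_def intro!: sum.neutral)
  next
    case True
    define N where "N = nat (n - m - k)"
    define h where "h i = coeff F i * (if i \<le> N then coeff G (N - i) else 0)" for i
    have "(\<Sum>i\<le>d. coeff F i * shiftL k G (n - m - int i)) = (\<Sum>i\<le>d. h i)"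
    proof (intro sum.cong refl)
      fix i assume "i \<in> {..d}"
      show "coeff F i * shiftL k G (n - m - int i) = h i"
      proof (cases "i \<le> N")
        case True
        then have "nat (n - m - int i - k) = N - i" using \<open>m + k \<le> n\<close> unfolding N_def by linarith
        moreover have "k \<le> n - m - int i" using True \<open>m + k \<le> n\<close> unfolding N_def by linarith
        ultimately show ?thesis using True by (simp add: h_def shiftL_def N_def)
      next
        case False
        then show ?thesis by (simp add: h_def shiftL_def N_def)
      qed
    qed
    also have "\<dots> = (\<Sum>i\<le>d + N. h i)"
      by (rule sum.mono_neutral_left) (auto simp: h_def d_def coeff_eq_0)
    also have "\<dots> = (\<Sum>i\<le>N. h i)"
      by (rule sum.mono_neutral_right) (auto simp: h_def)
    also have "\<dots> = coeff (F * G) N"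
      by (auto simp: coeff_mult h_def intro!: sum.cong)
    finally show ?thesis using True by (simp add: shiftL_def N_def algebra_simps)
  qed
  finally show "lmult (shiftL m F) (shiftL k G) n = shiftL (m + k) (F * G) n" .
qed

lemma degree_map_cnj [simp]: "degree (map_poly cnj P) = degree P"
  by (rule degree_map_poly) auto

lemma coeff_map_cnj [simp]: "coeff (map_poly cnj P) n = cnj (coeff P n)"
  by (rule coeff_map_poly) auto

lemma lstar_shift0: "lstar (shiftL 0 P) = shiftL (- int (degree P)) (refl P)"
proof
  fix n
  show "lstar (shiftL 0 P) n = shiftL (- int (degree P)) (refl P) n"
  proof (cases "n \<le> 0")
    case True
    show ?thesis
    proof (cases "- int (degree P) \<le> n")
      case True2: True
      then have "nat (n + int (degree P)) \<le> degree P" using True by linarith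
      then show ?thesis using True True2
        by (simp add: lstar_def shiftL_def refl_def coeff_reflect_poly nat_diff_distrib)
           (smt (verit, best) int_nat_eq nat_int nat_minus_as_int)
    next
      case False
      then have "nat (- n) > degree P" by linarith
      then show ?thesis using False True by (simp add: lstar_def shiftL_def coeff_eq_0)
    qed
  next
    case False
    then have "nat (n + int (degree P)) > degree P" by linarith
    then show ?thesis using False by (simp add: lstar_def shiftL_def refl_def coeff_reflect_poly)
  qed
qed

lemma lstar_lstar [simp]: "lstar (lstar f) = f"
  by (simp add: lstar_def fun_eq_iff)

lemma lstar_inj: "lstar f = lstar g \<Longrightarrow> f = g"
  by (metis lstar_lstar)


lemma lone_shiftL: "lone = shiftL 0 1"
  by (auto simp: fun_eq_iff lone_def shiftL_def)

lemma ptl_shiftL: "poly_to_laurent p = shiftL 0 p"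
  by (auto simp: fun_eq_iff poly_to_laurent_def shiftL_def)

lemma shiftL_inj:
  assumes "coeff F 0 \<noteq> 0" "coeff G 0 \<noteq> 0" "shiftL m F = shiftL k G"
  shows "m = k \<and> F = G"
proof -
  have "m = k"
  proof (rule ccontr)
    assume "m \<noteq> k"
    then consider "m < k" | "k < m" by linarith
    then show False
    proof cases
      case 1
      have "shiftL m F m = shiftL k G m" using assms(3) by simp
      then show False using 1 assms(1) by (simp add: shiftL_def)
    next
      case 2
      have "shiftL m F k = shiftL k G k" using assms(3) by simp
      then show False using 2 assms(2) by (simp add: shiftL_def)
    qed
  qed
  moreover have "F = G"
  proof (rule poly_eqI)
    fix i
    have "shiftL m F (m + int i) = shiftL k G (m + int i)" using assms(3) by simp
    then show "coeff F i = coeff G i" using \<open>m = k\<close> by (simp add: shiftL_def)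
  qed
  ultimately show ?thesis by simp
qed

lemma shiftL0_inj: "shiftL 0 P = shiftL 0 Q \<Longrightarrow> P = Q"
proof (rule poly_eqI)
  fix i assume "shiftL 0 P = shiftL 0 Q"
  then have "shiftL 0 P (int i) = shiftL 0 Q (int i)" by simp
  then show "coeff P i = coeff Q i" by (simp add: shiftL_def)
qed

lemma Poly_coeffs_upto: "Poly (map (coeff F) [0..<Suc (degree F)]) = F"
proof (rule poly_eqI)
  fix i
  show "coeff (Poly (map (coeff F) [0..<Suc (degree F)])) i = coeff F i"
    by (cases "i \<le> degree F") (auto simp: nth_default_def coeff_eq_0 simp del: upt_Suc)
qed

lemma lpoly_shiftL:
  assumes "coeff F 0 \<noteq> 0"
  shows "lpoly (shiftL m F) = F"
proof -
  have F0: "F \<noteq> 0" using assms by auto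
  have fin: "finite (lsupp (shiftL m F))" using is_laurent_shiftL by (simp add: is_laurent_def)
  have mem: "m \<in> lsupp (shiftL m F)" using assms by (simp add: lsupp_def shiftL_def)
  have mem2: "m + int (degree F) \<in> lsupp (shiftL m F)" using F0 by (simp add: lsupp_def shiftL_def)
  have lo: "\<And>j. j \<in> lsupp (shiftL m F) \<Longrightarrow> m \<le> j" by (auto simp: lsupp_def shiftL_def split: if_splits)
  have hi: "\<And>j. j \<in> lsupp (shiftL m F) \<Longrightarrow> j \<le> m + int (degree F)"
    using lsupp_shiftL[of m F] by auto
  have ld: "ldeg (shiftL m F) = m"
    unfolding ldeg_def using fin mem lo by (intro Min_eqI) auto
  have hd: "hdeg (shiftL m F) = m + int (degree F)"
    unfolding hdeg_def using fin mem2 hi by (intro Max_eqI) auto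
  have ne: "lsupp (shiftL m F) \<noteq> {}" using mem by blast
  have nn: "nat (hdeg (shiftL m F) - ldeg (shiftL m F)) + 1 = Suc (degree F)"
    unfolding ld hd by simp
  have "lpoly (shiftL m F) = Poly (map (\<lambda>i. shiftL m F (ldeg (shiftL m F) + int i))
          [0..<nat (hdeg (shiftL m F) - ldeg (shiftL m F)) + 1])"
    unfolding lpoly_def using ne by (simp only: if_False)
  also have "\<dots> = Poly (map (\<lambda>i. shiftL m F (m + int i)) [0..<Suc (degree F)])"
    unfolding nn unfolding ld ..
  also have "map (\<lambda>i. shiftL m F (m + int i)) [0..<Suc (degree F)] = map (coeff F) [0..<Suc (degree F)]"
    by (auto simp: shiftL_def)
  finally show ?thesis using Poly_coeffs_upto by simp
qed

lemma zero_notin_proots: "coeff F 0 \<noteq> 0 \<Longrightarrow> 0 \<notin># proots F"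
proof
  assume a: "coeff F 0 \<noteq> 0" "0 \<in># proots F"
  then have "F \<noteq> 0" by auto
  then have "poly F 0 = 0" using a(2) set_count_proots[of F] by simp
  then show False using a(1) by (simp add: poly_0_coeff_0)
qed

lemma lzeros_shiftL:
  assumes "coeff F 0 \<noteq> 0"
  shows "lzeros (shiftL m F) = proots F"
proof -
  have "filter_mset (\<lambda>z. z \<noteq> 0) (proots F) = proots F"
    using zero_notin_proots[OF assms] by (subst filter_mset_eq_conv) auto
  then show ?thesis by (simp add: lzeros_def lpoly_shiftL assms)
qed

lemma laurent_to_poly:
  assumes "is_laurent f" "\<forall>n<0. f n = 0"
  shows "\<exists>P. f = shiftL 0 P"
proof -
  have fin: "finite (lsupp f)" using assms(1) by (simp add: is_laurent_def)
  obtain N :: nat where N: "\<And>j. j \<in> lsupp f \<Longrightarrow> j < int N"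
  proof -
    have "finite (nat ` lsupp f)" using fin by simp
    then obtain B where "\<forall>x\<in>nat ` lsupp f. x \<le> B" using finite_nat_set_iff_bounded_le by blast
    then have B: "\<And>j. j \<in> lsupp f \<Longrightarrow> nat j \<le> B" by blast
    have "j < int (Suc B)" if "j \<in> lsupp f" for j
    proof -
      have "0 \<le> j" using that assms(2) by (force simp: lsupp_def)
      then show ?thesis using B[OF that] by linarith
    qed
    then show ?thesis by (rule that)
  qed
  define P where "P = Poly (map (\<lambda>i. f (int i)) [0..<N])"
  have "f = shiftL 0 P"
  proof
    fix n
    show "f n = shiftL 0 P n"
    proof (cases "0 \<le> n")
      case True
      show ?thesis
      proof (cases "nat n < N")
        case True
        then show ?thesis using \<open>0 \<le> n\<close> by (simp add: shiftL_def P_def nth_default_def)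
      next
        case False
        then have "n \<notin> lsupp f" using N \<open>0 \<le> n\<close> by force
        then show ?thesis using False \<open>0 \<le> n\<close> by (simp add: shiftL_def P_def nth_default_def lsupp_def)
      qed
    next
      case False
      then show ?thesis using assms(2) by (simp add: shiftL_def)
    qed
  qed
  then show ?thesis by blast
qed

lemma is_laurent_lstar: "is_laurent f \<Longrightarrow> is_laurent (lstar f)"
proof -
  assume "is_laurent f"
  then have "finite (uminus ` lsupp f)" by (simp add: is_laurent_def)
  moreover have "lsupp (lstar f) \<subseteq> uminus ` lsupp f"
  proof
    fix x assume "x \<in> lsupp (lstar f)"
    then have "- x \<in> lsupp f" by (simp add: lsupp_def lstar_def)
    then show "x \<in> uminus ` lsupp f" by (metis image_eqI minus_minus)
  qed
  ultimately show ?thesis unfolding is_laurent_def using finite_subset by blast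
qed

lemma coeff_refl_0: "coeff (refl P) 0 = cnj (lead_coeff P)"
  by (simp add: refl_def)

lemma refl_nz: "P \<noteq> 0 \<Longrightarrow> refl P \<noteq> 0"
proof -
  assume "P \<noteq> 0"
  then have "coeff (refl P) 0 \<noteq> 0" by (simp add: coeff_refl_0)
  then show ?thesis by auto
qed

lemma degree_refl: "coeff P 0 \<noteq> 0 \<Longrightarrow> degree (refl P) = degree P"
  by (simp add: refl_def)

lemma refl_smult: "refl (smult c P) = smult (cnj c) (refl P)"
  by (simp add: refl_def reflect_poly_smult map_poly_smult)

lemma lsmult_lstar: "lsmult c (lstar (shiftL 0 p)) = lstar (shiftL 0 (smult (cnj c) p))"
proof
  fix n
  show "lsmult c (lstar (shiftL 0 p)) n = lstar (shiftL 0 (smult (cnj c) p)) n"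
    unfolding lsmult_def lstar_def shiftL_def by simp
qed

lemma degree_reflP:
  assumes "coeff P 0 \<noteq> 0"
  shows "degree (refl P * P) = 2 * degree P" "coeff (refl P * P) 0 \<noteq> 0"
proof -
  have "P \<noteq> 0" using assms by auto
  then show "degree (refl P * P) = 2 * degree P"
    using assms by (simp add: degree_mult_eq refl_nz degree_refl)
  show "coeff (refl P * P) 0 \<noteq> 0"
    using assms \<open>P \<noteq> 0\<close> by (simp add: coeff_mult_0 coeff_refl_0)
qed


definition mir :: "complex \<Rightarrow> complex" where
  "mir z = 1 / cnj z"

lemma mir_mir [simp]: "mir (mir z) = z"
  by (simp add: mir_def)

lemma map_cnj_mult: "map_poly cnj (p * q) = map_poly cnj p * map_poly cnj q"
  by (subst poly_eq_poly_eq_iff[symmetric]) (simp add: fun_eq_iff)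

lemma refl_mult: "refl (p * q) = refl p * refl q"
  by (simp add: refl_def map_cnj_mult reflect_poly_mult)

lemma proots_lin: "proots [:- x, 1:] = {#x#}"
  using proots_linear_factor[of "-x"] by simp

lemma refl_lin:
  assumes "x \<noteq> 0"
  shows "refl [:- x, 1:] = smult (- cnj x) [:- mir x, 1:]"
proof -
  have "map_poly cnj [:- x, 1:] = [:- cnj x, 1:]" by (simp add: map_poly_pCons)
  moreover have "reflect_poly [:- cnj x, 1:] = [:1, - cnj x:]"
    using assms by (simp add: reflect_poly_pCons)
  moreover have "[:1, - cnj x:] = smult (- cnj x) [:- mir x, 1:]"
    using assms by (simp add: mir_def)
  ultimately show ?thesis by (simp add: refl_def)
qed

lemma proots_refl_prod:
  assumes "0 \<notin># S"
  shows "proots (refl (\<Prod>x\<in>#S. [:- x, 1:])) = image_mset mir S"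
  using assms
proof (induction S)
  case empty
  then show ?case by (simp add: refl_def)
next
  case (add x S)
  have x0: "x \<noteq> 0" using add.prems by auto
  have nz: "refl (\<Prod>x\<in>#S. [:- x, 1:]) \<noteq> 0"
    by (intro refl_nz) (auto simp: prod_mset_zero_iff)
  have eq: "refl (\<Prod>x\<in>#add_mset x S. [:- x, 1:]) = smult (- cnj x) [:- mir x, 1:] * refl (\<Prod>x\<in>#S. [:- x, 1:])"
    by (simp only: image_mset_add_mset prod_mset.add_mset refl_mult refl_lin[OF x0])
  have "proots (smult (- cnj x) [:- mir x, 1:] * refl (\<Prod>x\<in>#S. [:- x, 1:])) = proots (smult (- cnj x) [:- mir x, 1:]) + proots (refl (\<Prod>x\<in>#S. [:- x, 1:]))"
    using x0 nz by (intro proots_mult) auto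
  also have "proots (smult (- cnj x) [:- mir x, 1:]) = {#mir x#}"
    using x0 proots_smult[of "- cnj x" "[:- mir x, 1:]"] by (simp only: proots_lin) simp
  finally show ?case using add eq by simp
qed

lemma proots_prod_lin: "proots (\<Prod>x\<in>#S. [:- x, 1:]) = S"
proof (induction S)
  case (add x S)
  have nz: "(\<Prod>x\<in>#S. [:- x, 1:]) \<noteq> 0" by (auto simp: prod_mset_zero_iff)
  have "proots ([:- x, 1:] * (\<Prod>x\<in>#S. [:- x, 1:])) = proots [:- x, 1:] + proots (\<Prod>x\<in>#S. [:- x, 1:])"
    by (rule proots_mult) (use nz in auto)
  also have "\<dots> = add_mset x S" by (simp add: proots_lin add.IH)
  finally show ?case by (simp only: image_mset_add_mset prod_mset.add_mset)
qed simp

lemma proots_refl: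
  assumes "coeff F 0 \<noteq> 0"
  shows "proots (refl F) = image_mset mir (proots F)"
proof -
  have F0: "F \<noteq> 0" using assms by auto
  have "refl F = refl (smult (lead_coeff F) (\<Prod>x\<in>#proots F. [:-x, 1:]))"
    by (simp add: complex_poly_decompose_multiset)
  also have "\<dots> = smult (cnj (lead_coeff F)) (refl (\<Prod>x\<in>#proots F. [:-x, 1:]))"
    by (simp add: refl_smult)
  finally have "proots (refl F) = proots (refl (\<Prod>x\<in>#proots F. [:-x, 1:]))"
    using F0 by simp
  also have "\<dots> = image_mset mir (proots F)"
    by (rule proots_refl_prod[OF zero_notin_proots[OF assms]])
  finally show ?thesis .
qed

lemma proots_reflP:
  assumes "coeff F 0 \<noteq> 0"
  shows "proots (refl F * F) = image_mset mir (proots F) + proots F"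
proof -
  have F0: "F \<noteq> 0" using assms by auto
  then show ?thesis using refl_nz[OF F0] by (simp add: proots_mult proots_refl[OF assms])
qed

definition mu :: "complex poly \<Rightarrow> real" where
  "mu F = (\<Sum>i\<le>degree F. (cmod (coeff F i))\<^sup>2)"

lemma coeff_mid: "coeff (refl F * F) (degree F) = complex_of_real (mu F)"
proof -
  have "coeff (refl F * F) (degree F) = coeff (F * refl F) (degree F)" by (simp add: mult.commute)
  also have "\<dots> = (\<Sum>i\<le>degree F. coeff F i * coeff (refl F) (degree F - i))"
    by (simp add: coeff_mult)
  also have "\<dots> = (\<Sum>i\<le>degree F. complex_of_real ((cmod (coeff F i))\<^sup>2))"
  proof (intro sum.cong refl)
    fix i assume "i \<in> {..degree F}"
    then have cf: "coeff (refl F) (degree F - i) = cnj (coeff F i)"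
      by (simp add: refl_def coeff_reflect_poly)
    show "coeff F i * coeff (refl F) (degree F - i) = complex_of_real ((cmod (coeff F i))\<^sup>2)"
      by (simp only: complex_norm_square cf)
  qed
  finally show ?thesis by (simp add: mu_def)
qed

lemma mu_pos: "F \<noteq> 0 \<Longrightarrow> mu F > 0"
proof -
  assume "F \<noteq> 0"
  then have "(cmod (coeff F (degree F)))\<^sup>2 > 0" by simp
  also have "(cmod (coeff F (degree F)))\<^sup>2 \<le> mu F"
    unfolding mu_def by (rule member_le_sum) auto
  finally show ?thesis .
qed

lemma same_proots_smult:
  fixes p q :: "complex poly"
  assumes "p \<noteq> 0" "q \<noteq> 0" "proots p = proots q"
  shows "p = smult (lead_coeff p / lead_coeff q) q"
proof -
  define Pi where "Pi = (\<Prod>x\<in>#proots q. [:-x, 1:])"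
  have peq: "smult (lead_coeff p) Pi = p"
    unfolding Pi_def assms(3)[symmetric] by (rule complex_poly_decompose_multiset)
  have qeq: "smult (lead_coeff q) Pi = q"
    unfolding Pi_def by (rule complex_poly_decompose_multiset)
  have lq: "lead_coeff q \<noteq> 0" using assms(2) by simp
  have "smult (lead_coeff p / lead_coeff q) (smult (lead_coeff q) Pi) = smult (lead_coeff p / lead_coeff q * lead_coeff q) Pi"
    by (rule smult_smult)
  then have "smult (lead_coeff p / lead_coeff q) q = smult (lead_coeff p) Pi"
    using lq by (simp only: qeq) simp
  then show ?thesis using peq by simp
qed

definition GG :: "complex poly \<Rightarrow> complex poly set" where
  "GG M = {P. Im (coeff P 0) = 0 \<and> 0 < Re (coeff P 0) \<and> refl P * P = M}"

lemma GG_coeff0: "P \<in> GG M \<Longrightarrow> coeff P 0 \<noteq> 0"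
  by (auto simp: GG_def)

lemma smult_cancel_right:
  fixes p :: "complex poly"
  assumes "p \<noteq> 0" "smult a p = smult b p"
  shows "a = b"
proof -
  have "coeff (smult a p) (degree p) = coeff (smult b p) (degree p)" using assms(2) by simp
  then show ?thesis using assms(1) by simp
qed

lemma GG_unique_scale:
  assumes P0: "coeff P0 0 \<noteq> 0" and M: "M = refl P0 * P0"
    and F0: "coeff F 0 \<noteq> 0" and R: "proots M = image_mset mir (proots F) + proots F"
  shows "\<exists>!d. smult d F \<in> GG M"
proof -
  define Fr where "Fr = refl F * F"
  have Fnz: "F \<noteq> 0" using F0 by auto
  have P0nz: "P0 \<noteq> 0" using P0 by auto
  have Frnz: "Fr \<noteq> 0" using degree_reflP(2)[OF F0] by (auto simp: Fr_def)
  have Mnz: "M \<noteq> 0" using degree_reflP(2)[OF P0] M by auto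
  have "proots Fr = proots M" using R proots_reflP[OF F0] by (simp add: Fr_def)
  then have Mk: "M = smult (lead_coeff M / lead_coeff Fr) Fr"
    using same_proots_smult[OF Mnz Frnz] by simp
  define k where "k = lead_coeff M / lead_coeff Fr"
  have k0: "k \<noteq> 0" using Mnz Frnz by (simp add: k_def)
  have "degree M = degree Fr" using Mk k0 by (metis degree_smult_eq k_def)
  then have degeq: "degree F = degree P0"
    using degree_reflP(1)[OF F0] degree_reflP(1)[OF P0] M by (simp add: Fr_def)
  have "coeff M (degree P0) = k * coeff Fr (degree P0)"
    using Mk unfolding k_def by (metis coeff_smult)
  then have "complex_of_real (mu P0) = k * complex_of_real (mu F)"
    using coeff_mid[of P0] coeff_mid[of F] M degeq by (simp add: Fr_def)
  then have kval: "k = complex_of_real (mu P0 / mu F)"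
    using mu_pos[OF Fnz] by (simp add: field_simps)
  define \<kappa> where "\<kappa> = mu P0 / mu F"
  have kpos: "\<kappa> > 0" using mu_pos[OF Fnz] mu_pos[OF P0nz] by (simp add: \<kappa>_def)
  have Mk2: "M = smult (complex_of_real \<kappa>) Fr" using Mk kval by (simp add: k_def \<kappa>_def)
  have key: "smult d F \<in> GG M \<longleftrightarrow> Im (d * coeff F 0) = 0 \<and> 0 < Re (d * coeff F 0) \<and> cnj d * d = complex_of_real \<kappa>" for d
  proof -
    have "refl (smult d F) * smult d F = smult (cnj d * d) Fr"
      by (simp add: refl_smult Fr_def mult_smult_left mult_smult_right mult.commute)
    then have "refl (smult d F) * smult d F = M \<longleftrightarrow> cnj d * d = complex_of_real \<kappa>"
      using Mk2 smult_cancel_right[OF Frnz] by auto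
    then show ?thesis by (simp add: GG_def)
  qed
  define c0 where "c0 = coeff F 0"
  have c0nz: "cmod c0 > 0" using F0 by (simp add: c0_def)
  define d0 where "d0 = complex_of_real (sqrt \<kappa> / cmod c0) * cnj c0"
  define a where "a = sqrt \<kappa> / cmod c0"
  have nc: "cnj c0 * c0 = complex_of_real ((cmod c0)\<^sup>2)"
    by (metis complex_norm_square mult.commute)
  have "d0 * c0 = complex_of_real a * (cnj c0 * c0)"
    by (simp only: d0_def a_def mult.assoc)
  also have "\<dots> = complex_of_real (a * (cmod c0)\<^sup>2)" by (simp only: nc of_real_mult)
  also have "a * (cmod c0)\<^sup>2 = sqrt \<kappa> * cmod c0"
    using c0nz by (simp add: power2_eq_square a_def)
  finally have d0c0: "d0 * c0 = complex_of_real (sqrt \<kappa> * cmod c0)" .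
  have "cnj d0 * d0 = complex_of_real a * complex_of_real a * (cnj c0 * c0)"
    by (simp only: d0_def a_def complex_cnj_mult complex_cnj_complex_of_real complex_cnj_cnj mult_ac)
  also have "\<dots> = complex_of_real (a * a * (cmod c0)\<^sup>2)" by (simp only: nc of_real_mult)
  also have "a * a * (cmod c0)\<^sup>2 = \<kappa>"
    using c0nz kpos by (simp add: power2_eq_square a_def)
  finally have d0d0: "cnj d0 * d0 = complex_of_real \<kappa>" .
  have i1: "Im (d0 * c0) = 0" unfolding d0c0 by simp
  have i2: "0 < Re (d0 * c0)" unfolding d0c0 using kpos c0nz by simp
  have ex: "smult d0 F \<in> GG M"
    unfolding key using i1 i2 d0d0 unfolding c0_def by blast
  have un: "d = d0" if "smult d F \<in> GG M" for d
  proof -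
    have h: "Im (d * c0) = 0" "0 < Re (d * c0)" "cnj d * d = complex_of_real \<kappa>"
      using that key by (auto simp: c0_def)
    have "(cmod d)\<^sup>2 = \<kappa>"
      using h(3) complex_norm_square[of d] by (metis mult.commute of_real_eq_iff)
    then have cd: "cmod d = sqrt \<kappa>" by (metis norm_ge_zero real_sqrt_unique)
    have "d * c0 = complex_of_real (Re (d * c0))" using h(1) by (simp add: complex_eq_iff)
    also have "Re (d * c0) = cmod (d * c0)" using h(1,2) by (simp add: cmod_def)
    also have "cmod (d * c0) = sqrt \<kappa> * cmod c0" by (simp add: norm_mult cd)
    finally have "d * c0 = d0 * c0" using d0c0 by simp
    then show ?thesis using c0nz by auto
  qed
  show ?thesis
  proof (rule ex1I[where a = d0])
    show "smult d0 F \<in> GG M" by (rule ex)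
  next
    fix d assume "smult d F \<in> GG M"
    then show "d = d0" by (rule un)
  qed
qed


lemma mir_vimage: "mir -` {x} = {mir x}"
proof
  show "mir -` {x} \<subseteq> {mir x}"
  proof
    fix y assume "y \<in> mir -` {x}"
    then have "mir y = x" by simp
    then have "mir (mir y) = mir x" by simp
    then show "y \<in> {mir x}" by simp
  qed
  show "{mir x} \<subseteq> mir -` {x}" by simp
qed

lemma count_image_mir: "count (image_mset mir S) x = count S (mir x)"
proof -
  have "count (image_mset mir S) x = sum (count S) ({mir x} \<inter> set_mset S)"
    by (simp only: count_image_mset mir_vimage)
  also have "\<dots> = count S (mir x)"
    by (cases "mir x \<in># S") (simp_all add: count_eq_zero_iff)
  finally show ?thesis .
qed

lemma SS_iff: "image_mset mir S + S = R \<longleftrightarrow> (\<forall>x. count S (mir x) + count S x = count R x)"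
  unfolding multiset_eq_iff count_union count_image_mir ..

lemma mir_nz: "x \<noteq> 0 \<Longrightarrow> mir x \<noteq> 0"
  by (simp add: mir_def)

lemma mir_fix: 
  assumes "x \<noteq> 0"
  shows "mir x = x \<longleftrightarrow> cmod x = 1"
proof -
  have c: "cnj x \<noteq> 0" using assms by simp
  have "mir x = x \<longleftrightarrow> 1 = x * cnj x"
    unfolding mir_def using c by (simp add: divide_eq_eq)
  also have "x * cnj x = complex_of_real ((cmod x)\<^sup>2)" by (simp only: complex_norm_square)
  also have "1 = complex_of_real ((cmod x)\<^sup>2) \<longleftrightarrow> (cmod x)\<^sup>2 = 1"
    by (metis of_real_1 of_real_eq_iff)
  also have "\<dots> \<longleftrightarrow> cmod x = 1"
    using norm_ge_zero[of x] unfolding power2_eq_1_iff by linarith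
  finally show ?thesis .
qed

lemma rclass_mir: "rclass x = {x, mir x}"
  by (simp add: rclass_def mir_def)

lemma rclass_mir_sym: "rclass (mir x) = rclass x"
  by (auto simp: rclass_mir)

definition repc :: "complex set \<Rightarrow> complex" where
  "repc y = (SOME x. x \<in> y)"

lemma repc_rclass: "repc (rclass x) = x \<or> repc (rclass x) = mir x"
proof -
  have "x \<in> rclass x" by (simp add: rclass_mir)
  then have "repc (rclass x) \<in> rclass x" unfolding repc_def by (rule someI)
  then show ?thesis by (simp add: rclass_mir)
qed

lemma rclass_repc: "rclass (repc (rclass x)) = rclass x"
proof (cases "repc (rclass x) = x")
  case True
  then show ?thesis by (simp only: True)
next
  case False
  then have h: "repc (rclass x) = mir x" using repc_rclass[of x] by blast
  show ?thesis by (simp only: h rclass_mir_sym)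
qed

lemma count_main:
  assumes R0: "0 \<notin># R" and S0: "R = image_mset mir S0 + S0"
  shows "finite {S. image_mset mir S + S = R} \<and> card {S. image_mset mir S + S = R} = NN R"
proof -
  have sym: "count R (mir x) = count R x" for x
    using S0 by (simp add: count_image_mir)
  have even: "count R x = 2 * (count R x div 2)" if "mir x = x" for x
  proof -
    have "count R x = count S0 x + count S0 x"
      using S0 that by (simp add: count_image_mir)
    then show ?thesis by simp
  qed
  have memR_mir: "mir x \<in># R \<longleftrightarrow> x \<in># R" for x
    using sym[of x] by (metis count_eq_zero_iff)
  define Y where "Y = rclass ` set_mset R"
  define C where "C y = (if mir (repc y) = repc y then {count R (repc y) div 2} else {..count R (repc y)})" for y
  define Sset where "Sset = {S. image_mset mir S + S = R}"
  have Sset_iff: "S \<in> Sset \<longleftrightarrow> (\<forall>x. count S (mir x) + count S x = count R x)" for S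
    by (simp add: Sset_def SS_iff)
  define Phi where "Phi S = restrict (\<lambda>y. count S (repc y)) Y" for S
  have Yrep: "repc y \<in># R \<and> rclass (repc y) = y" if yY: "y \<in> Y" for y
  proof -
    obtain x where x: "x \<in># R" "y = rclass x" using yY unfolding Y_def by blast
    then show ?thesis using repc_rclass[of x] rclass_repc[of x] memR_mir[of x] by auto
  qed
  have le: "count S x \<le> count R x" if "S \<in> Sset" for S x
    using that Sset_iff by (metis le_add2)
  have into: "Phi S \<in> PiE Y C" if S: "S \<in> Sset" for S
    unfolding Phi_def restrict_PiE_iff
  proof
    fix y assume "y \<in> Y"
    define r where "r = repc y"
    show "count S (repc y) \<in> C y"
    proof (cases "mir r = r")
      case True
      have "count S (mir r) + count S r = count R r" using S Sset_iff by blast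
      then have "count S r = count R r div 2" using True by simp
      then show ?thesis using True by (simp add: C_def r_def)
    next
      case False
      then show ?thesis using le[OF S, of r] by (simp add: C_def r_def)
    qed
  qed
  have bij: "bij_betw Phi Sset (PiE Y C)"
  proof (rule bij_betwI')
    fix S S' assume S: "S \<in> Sset" and S': "S' \<in> Sset"
    show "(Phi S = Phi S') = (S = S')"
    proof
      assume eq: "Phi S = Phi S'"
      show "S = S'"
      proof (rule multiset_eqI)
        fix x
        show "count S x = count S' x"
        proof (cases "x \<in># R")
          case False
          then show ?thesis using le[OF S, of x] le[OF S', of x] by (simp add: not_in_iff)
        next
          case True
          then have yY: "rclass x \<in> Y" by (simp add: Y_def)
          have ce: "count S (repc (rclass x)) = count S' (repc (rclass x))"
            using fun_cong[OF eq, of "rclass x"] yY by (simp add: Phi_def)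
          from repc_rclass[of x] show ?thesis
          proof
            assume "repc (rclass x) = x" then show ?thesis using ce by simp
          next
            assume "repc (rclass x) = mir x"
            then have "count S (mir x) = count S' (mir x)" using ce by simp
            moreover have "count S (mir x) + count S x = count R x" using S Sset_iff by blast
            moreover have "count S' (mir x) + count S' x = count R x" using S' Sset_iff by blast
            ultimately show ?thesis by linarith
          qed
        qed
      qed
    qed simp
  next
    fix S assume "S \<in> Sset" then show "Phi S \<in> PiE Y C" by (rule into)
  next
    fix f assume f: "f \<in> PiE Y C"
    define g where "g x = (if x \<in># R then (if repc (rclass x) = x then f (rclass x) else count R x - f (rclass x)) else 0)" for x
    have fin: "finite {x. g x > 0}"
      by (rule finite_subset[of _ "set_mset R"]) (auto simp: g_def split: if_splits)
    define S where "S = Abs_multiset g"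
    have cS: "count S = g" unfolding S_def using fin by (rule count_Abs_multiset)
    have fC: "f y \<in> C y" if "y \<in> Y" for y using f that by (simp add: PiE_iff)
    have cons: "g (mir x) + g x = count R x" for x
    proof (cases "x \<in># R")
      case False
      then have m: "mir x \<notin># R" using memR_mir[of x] by simp
      have "g x = 0" using False by (simp add: g_def)
      moreover have "g (mir x) = 0" using m by (simp add: g_def)
      moreover have "count R x = 0" using False by (simp add: not_in_iff)
      ultimately show ?thesis by simp
    next
      case True
      define y where "y = rclass x"
      have yY: "y \<in> Y" using True by (simp add: Y_def y_def)
      have ry: "rclass (mir x) = y" by (simp add: y_def rclass_mir_sym)
      have mR: "mir x \<in># R" using True memR_mir by simp
      show ?thesis
      proof (cases "mir x = x")
        case True
        then have "repc y = x" using repc_rclass[of x] by (auto simp: y_def)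
        then have "f y = count R x div 2" using fC[OF yY] True by (simp add: C_def)
        then have "g x = count R x div 2" using \<open>x \<in># R\<close> \<open>repc y = x\<close> by (simp add: g_def y_def)
        then show ?thesis using True even[OF True] by simp
      next
        case False
        from repc_rclass[of x] show ?thesis
        proof
          assume rx: "repc (rclass x) = x"
          then have "f y \<le> count R x" using fC[OF yY] False by (simp add: C_def y_def)
          moreover have "g x = f y" using \<open>x \<in># R\<close> rx by (simp add: g_def y_def)
          moreover have "g (mir x) = count R x - f y"
            using mR rx ry False sym[of x] by (simp add: g_def y_def)
          ultimately show ?thesis by simp
        next
          assume rx: "repc (rclass x) = mir x"
          have "mir (mir x) \<noteq> mir x" using False by simp
          then have "f y \<le> count R x" using fC[OF yY] rx sym[of x] by (simp add: C_def y_def)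
          moreover have "g x = count R x - f y" using \<open>x \<in># R\<close> rx False by (simp add: g_def y_def)
          moreover have "g (mir x) = f y"
            using mR rx ry by (simp add: g_def y_def)
          ultimately show ?thesis by simp
        qed
      qed
    qed
    have SS: "S \<in> Sset" unfolding Sset_iff cS using cons by blast
    have "f = Phi S"
    proof (rule PiE_ext[OF f])
      show "Phi S \<in> PiE Y C" using SS by (rule into)
    next
      fix y assume yY: "y \<in> Y"
      have r: "repc y \<in># R" "rclass (repc y) = y" using Yrep[OF yY] by auto
      show "f y = Phi S y" using r yY by (simp add: Phi_def cS g_def)
    qed
    then show "\<exists>S\<in>Sset. f = Phi S" using SS by blast
  qed
  have finY: "finite Y" by (simp add: Y_def)
  have finPi: "finite (PiE Y C)" using finY by (intro finite_PiE) (auto simp: C_def)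
  have "card Sset = card (PiE Y C)" by (rule bij_betw_same_card[OF bij])
  also have "\<dots> = (\<Prod>y\<in>Y. card (C y))" by (rule card_PiE[OF finY])
  also have "\<dots> = NN R"
    unfolding NN_def Y_def[symmetric]
  proof (rule prod.cong[OF refl])
    fix y assume yY: "y \<in> Y"
    define r where "r = repc y"
    have rR: "r \<in># R" and ry: "y = {r, mir r}" using Yrep[OF yY] by (auto simp: r_def rclass_mir)
    have r0: "r \<noteq> 0" using rR R0 by auto
    show "card (C y) = sharp R y"
    proof (cases "mir r = r")
      case True
      then have "cmod r = 1" using mir_fix[OF r0] by simp
      then have "\<exists>x\<in>y. cmod x = 1" using ry by auto
      then show ?thesis using True by (simp add: C_def sharp_def r_def)
    next
      case False
      have n1: "cmod r \<noteq> 1" using False mir_fix[OF r0] by simp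
      have n2: "cmod (mir r) \<noteq> 1" using False mir_fix[OF mir_nz[OF r0]] by auto
      have "\<not> (\<exists>x\<in>y. cmod x = 1)" using ry n1 n2 by auto
      moreover have "class_size R y = 2 * count R r"
        using ry False sym[of r] by (simp add: class_size_def)
      ultimately show ?thesis using False by (simp add: C_def sharp_def r_def)
    qed
  qed
  finally show ?thesis using bij_betw_finite[OF bij] finPi by (simp add: Sset_def)
qed


lemma cond_iff:
  "((\<lambda>n. lmult x (lstar x) n + lmult b (lstar b) n) = lone) \<longleftrightarrow>
   lmult x (lstar x) = lminus lone (lmult b (lstar b))"
proof
  assume h: "(\<lambda>n. lmult x (lstar x) n + lmult b (lstar b) n) = lone"
  show "lmult x (lstar x) = lminus lone (lmult b (lstar b))"
  proof
    fix n
    have "lmult x (lstar x) n + lmult b (lstar b) n = lone n" using fun_cong[OF h, of n] by simp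
    then show "lmult x (lstar x) n = lminus lone (lmult b (lstar b)) n"
      by (simp add: lminus_def algebra_simps)
  qed
next
  assume h: "lmult x (lstar x) = lminus lone (lmult b (lstar b))"
  show "(\<lambda>n. lmult x (lstar x) n + lmult b (lstar b) n) = lone"
  proof
    fix n
    show "lmult x (lstar x) n + lmult b (lstar b) n = lone n"
      using fun_cong[OF h, of n] by (simp add: lminus_def)
  qed
qed

lemma lmult_sq: "lmult (lstar (shiftL 0 P)) (lstar (lstar (shiftL 0 P))) = shiftL (- int (degree P)) (refl P * P)"
  by (simp only: lstar_lstar) (simp add: lstar_shift0 lmult_shiftL)

lemma fib_char:
  assumes bl: "is_laurent b"
    and D: "lminus lone (lmult b (lstar b)) = shiftL (- int (degree P0)) (refl P0 * P0)"
    and P0: "coeff P0 0 \<noteq> 0"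
  shows "(x, b) \<in> SS \<longleftrightarrow> (\<exists>P\<in>GG (refl P0 * P0). x = lstar (shiftL 0 P))"
proof
  assume xS: "(x, b) \<in> SS"
  then have xl: "is_laurent x" and c: "lmult x (lstar x) = lminus lone (lmult b (lstar b))"
    and v: "val0_pos (lstar x)"
    by (auto simp: SS_def cond_iff)
  obtain P where P: "lstar x = shiftL 0 P"
    using laurent_to_poly[OF is_laurent_lstar[OF xl]] v by (auto simp: val0_pos_def)
  have x: "x = lstar (shiftL 0 P)" using P by (metis lstar_lstar)
  have cP: "coeff P 0 = lstar x 0" using P by (simp add: shiftL_def)
  have im: "Im (coeff P 0) = 0" and re: "0 < Re (coeff P 0)"
    using v cP by (auto simp: val0_pos_def complex_is_Real_iff)
  have P0': "coeff P 0 \<noteq> 0" using re by auto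
  have "shiftL (- int (degree P)) (refl P * P) = shiftL (- int (degree P0)) (refl P0 * P0)"
    using c D lmult_sq[of P] x by simp
  then have "refl P * P = refl P0 * P0"
    using shiftL_inj degree_reflP(2)[OF P0'] degree_reflP(2)[OF P0] by blast
  then have "P \<in> GG (refl P0 * P0)" using im re by (simp add: GG_def)
  then show "\<exists>P\<in>GG (refl P0 * P0). x = lstar (shiftL 0 P)" using x by blast
next
  assume "\<exists>P\<in>GG (refl P0 * P0). x = lstar (shiftL 0 P)"
  then obtain P where PG: "P \<in> GG (refl P0 * P0)" and x: "x = lstar (shiftL 0 P)" by blast
  have im: "Im (coeff P 0) = 0" and re: "0 < Re (coeff P 0)" and eq: "refl P * P = refl P0 * P0"
    using PG by (auto simp: GG_def)
  have P0': "coeff P 0 \<noteq> 0" using re by auto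
  have "2 * degree P = 2 * degree P0"
    using degree_reflP(1)[OF P0'] degree_reflP(1)[OF P0] eq by simp
  then have dg: "degree P = degree P0" by simp
  have xl: "is_laurent x" unfolding x lstar_shift0 by (rule is_laurent_shiftL)
  have v: "val0_pos (lstar x)"
    using im re by (simp add: x val0_pos_def shiftL_def complex_is_Real_iff)
  have c: "lmult x (lstar x) = lminus lone (lmult b (lstar b))"
    using lmult_sq[of P] x D eq dg by simp
  show "(x, b) \<in> SS" using xl bl v c by (simp add: SS_def cond_iff)
qed

lemma sum_pairs: "(\<Sum>\<alpha>\<in>#S. {#\<alpha>, 1 / cnj \<alpha>#}) = image_mset mir S + S"
  by (induction S) (auto simp: mir_def)

lemma filter_T_mir:
  "filter_mset (\<lambda>z. cmod z = 1) (image_mset mir S) = filter_mset (\<lambda>z. cmod z = 1) S"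
proof (rule multiset_eqI)
  fix x
  show "count (filter_mset (\<lambda>z. cmod z = 1) (image_mset mir S)) x = count (filter_mset (\<lambda>z. cmod z = 1) S) x"
  proof (cases "cmod x = 1")
    case True
    then have "x \<noteq> 0" by auto
    then have "mir x = x" using mir_fix True by blast
    then show ?thesis using True by (simp add: count_image_mir)
  next
    case False
    then show ?thesis by simp
  qed
qed


lemma double_cancel:
  fixes X Y :: "'a multiset"
  assumes "X + X = Y + Y"
  shows "X = Y"
proof (rule multiset_eqI)
  fix x
  have "count (X + X) x = count (Y + Y) x" using assms by simp
  then show "count X x = count Y x" by simp
qed

theorem lemmaA2:
  fixes b :: laurent
  assumes hb: "b \<in> BB"
  defines "R \<equiv> lzeros (lminus lone (lmult b (lstar b)))"
  shows "(finite (fibre2 b) \<and> card (fibre2 b) = NN R) \<and>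
         (\<forall>a a'. (a, b) \<in> fibre2 b \<longrightarrow> (a', b) \<in> fibre2 b \<longrightarrow>
           (a \<noteq> a' \<longleftrightarrow> lzeros (lstar a) \<noteq> lzeros (lstar a')) \<and>
           filter_mset (\<lambda>z. cmod z = 1) (lzeros a) = filter_mset (\<lambda>z. cmod z = 1) (lzeros a')) \<and>
         (\<forall>p :: complex poly. poly p 0 \<noteq> 0 \<longrightarrow>
           ((lstar (poly_to_laurent p), b) \<in> fibre2 b \<longrightarrow>
              R = (\<Sum>\<alpha>\<in>#proots p. {#\<alpha>, 1 / cnj \<alpha>#})) \<and>
           (R = (\<Sum>\<alpha>\<in>#proots p. {#\<alpha>, 1 / cnj \<alpha>#}) \<longrightarrow>
              (\<exists>!c. c \<noteq> 0 \<and> (lsmult c (lstar (poly_to_laurent p)), b) \<in> fibre2 b)))"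
proof -
  obtain a0 where a0: "(a0, b) \<in> SS" using hb by (auto simp: BB_def)
  have bl: "is_laurent b" and a0l: "is_laurent a0" and v0: "val0_pos (lstar a0)"
    and c0: "lmult a0 (lstar a0) = lminus lone (lmult b (lstar b))"
    using a0 by (auto simp: SS_def cond_iff)
  obtain P0 where P0: "lstar a0 = shiftL 0 P0"
    using laurent_to_poly[OF is_laurent_lstar[OF a0l]] v0 by (auto simp: val0_pos_def)
  have a0eq: "a0 = lstar (shiftL 0 P0)" using P0 by (metis lstar_lstar)
  have "coeff P0 0 = lstar a0 0" using P0 by (simp add: shiftL_def)
  then have P00: "coeff P0 0 \<noteq> 0" using v0 by (auto simp: val0_pos_def)
  define M where "M = refl P0 * P0"
  have D: "lminus lone (lmult b (lstar b)) = shiftL (- int (degree P0)) M"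
    using c0 lmult_sq[of P0] a0eq by (simp add: M_def)
  have M0: "coeff M 0 \<noteq> 0" using degree_reflP(2)[OF P00] by (simp add: M_def)
  have Rp: "R = proots M" unfolding R_def D by (rule lzeros_shiftL[OF M0])
  have RS0: "R = image_mset mir (proots P0) + proots P0"
    using Rp proots_reflP[OF P00] by (simp add: M_def)
  have R0: "0 \<notin># R" using Rp zero_notin_proots[OF M0] by simp
  have fibc: "(x, b) \<in> SS \<longleftrightarrow> (\<exists>P\<in>GG M. x = lstar (shiftL 0 P))" for x
    unfolding M_def by (rule fib_char[OF bl D[unfolded M_def] P00])
  define emb where "emb P = (lstar (shiftL 0 P), b)" for P
  have fibeq: "fibre2 b = emb ` GG M"
  proof
    show "fibre2 b \<subseteq> emb ` GG M"
    proof
      fix q assume "q \<in> fibre2 b"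
      then obtain x where q: "q = (x, b)" and "(x, b) \<in> SS" by (cases q) (auto simp: fibre2_def)
      then obtain P where "P \<in> GG M" "x = lstar (shiftL 0 P)" using fibc by blast
      then show "q \<in> emb ` GG M" using q by (auto simp: emb_def)
    qed
    show "emb ` GG M \<subseteq> fibre2 b"
    proof
      fix q assume "q \<in> emb ` GG M"
      then obtain P where P: "P \<in> GG M" "q = emb P" by blast
      then have "(lstar (shiftL 0 P), b) \<in> SS" using fibc by blast
      then show "q \<in> fibre2 b" using P by (simp add: emb_def fibre2_def)
    qed
  qed
  have emb_inj: "inj_on emb (GG M)"
    by (rule inj_onI) (auto simp: emb_def dest: lstar_inj shiftL0_inj)
  have GGprops: "coeff P 0 \<noteq> 0 \<and> proots M = image_mset mir (proots P) + proots P" if "P \<in> GG M" for P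
  proof -
    have "coeff P 0 \<noteq> 0" by (rule GG_coeff0[OF that])
    moreover have "refl P * P = M" using that by (simp add: GG_def)
    ultimately show ?thesis using proots_reflP by metis
  qed
  have proots_inj: "P = P'" if P: "P \<in> GG M" and P': "P' \<in> GG M" and eq: "proots P = proots P'" for P P'
  proof -
    have P0': "coeff P 0 \<noteq> 0" and RP: "proots M = image_mset mir (proots P) + proots P"
      using GGprops[OF P] by auto
    have "P \<noteq> 0" "P' \<noteq> 0" using P0' GG_coeff0[OF P'] by auto
    then have P'eq: "P' = smult (lead_coeff P' / lead_coeff P) P"
      using same_proots_smult eq by metis
    have u: "\<exists>!d. smult d P \<in> GG M"
      by (rule GG_unique_scale[OF P00 M_def P0' RP])
    have "smult 1 P \<in> GG M" using P by simp
    moreover have "smult (lead_coeff P' / lead_coeff P) P \<in> GG M" using P' P'eq by simp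
    ultimately have "lead_coeff P' / lead_coeff P = 1" using u by blast
    then show ?thesis using P'eq by simp
  qed
  define Sset where "Sset = {S. image_mset mir S + S = R}"
  have bijP: "bij_betw proots (GG M) Sset"
  proof (rule bij_betwI')
    fix P P' assume "P \<in> GG M" "P' \<in> GG M"
    then show "(proots P = proots P') = (P = P')" using proots_inj by blast
  next
    fix P assume "P \<in> GG M"
    then show "proots P \<in> Sset" using GGprops Rp by (simp add: Sset_def)
  next
    fix S assume S: "S \<in> Sset"
    define F where "F = (\<Prod>x\<in>#S. [:- x, 1:])"
    have pF: "proots F = S" unfolding F_def by (rule proots_prod_lin)
    have Fnz: "F \<noteq> 0" by (auto simp: F_def prod_mset_zero_iff)
    have "count S 0 \<le> count R 0" using S by (auto simp: Sset_def)
    then have "0 \<notin># S" using R0 by (simp add: not_in_iff)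
    then have "poly F 0 \<noteq> 0" using pF Fnz set_count_proots[of F] by auto
    then have F0: "coeff F 0 \<noteq> 0" by (simp add: poly_0_coeff_0)
    have "proots M = image_mset mir (proots F) + proots F" using S Rp pF by (simp add: Sset_def)
    then obtain d where d: "smult d F \<in> GG M"
      using GG_unique_scale[OF P00 M_def F0] by blast
    then have "d \<noteq> 0" using GG_coeff0[OF d] by auto
    then have "proots (smult d F) = S" using pF by simp
    then show "\<exists>P\<in>GG M. S = proots P" using d by metis
  qed
  have part1: "finite (fibre2 b) \<and> card (fibre2 b) = NN R"
  proof -
    have cm: "finite Sset \<and> card Sset = NN R" unfolding Sset_def by (rule count_main[OF R0 RS0])
    have "finite (GG M)" using bij_betw_finite[OF bijP] cm by simp
    moreover have "card (GG M) = NN R" using bij_betw_same_card[OF bijP] cm by simp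
    ultimately show ?thesis unfolding fibeq using card_image[OF emb_inj] by simp
  qed
  have part2: "(a \<noteq> a' \<longleftrightarrow> lzeros (lstar a) \<noteq> lzeros (lstar a')) \<and>
           filter_mset (\<lambda>z. cmod z = 1) (lzeros a) = filter_mset (\<lambda>z. cmod z = 1) (lzeros a')"
    if ha: "(a, b) \<in> fibre2 b" and ha': "(a', b) \<in> fibre2 b" for a a'
  proof -
    obtain P where P: "P \<in> GG M" "a = lstar (shiftL 0 P)" using ha fibc by (auto simp: fibre2_def)
    obtain P' where P': "P' \<in> GG M" "a' = lstar (shiftL 0 P')" using ha' fibc by (auto simp: fibre2_def)
    have c: "coeff P 0 \<noteq> 0" and RP: "proots M = image_mset mir (proots P) + proots P"
      using GGprops[OF P(1)] by auto
    have c': "coeff P' 0 \<noteq> 0" and RP': "proots M = image_mset mir (proots P') + proots P'"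
      using GGprops[OF P'(1)] by auto
    have z1: "lzeros (lstar a) = proots P" using P(2) lzeros_shiftL[OF c] by simp
    have z2: "lzeros (lstar a') = proots P'" using P'(2) lzeros_shiftL[OF c'] by simp
    have "a = a' \<longleftrightarrow> P = P'"
      using P(2) P'(2) by (auto dest: lstar_inj shiftL0_inj)
    then have i1: "a \<noteq> a' \<longleftrightarrow> lzeros (lstar a) \<noteq> lzeros (lstar a')"
      unfolding z1 z2 using proots_inj[OF P(1) P'(1)] by blast
    define T where "T = (\<lambda>z::complex. cmod z = 1)"
    have zr: "lzeros (lstar (shiftL 0 Q)) = image_mset mir (proots Q)" if "coeff Q 0 \<noteq> 0" for Q
    proof -
      have "coeff (refl Q) 0 \<noteq> 0" using that by (auto simp: coeff_refl_0)
      then show ?thesis unfolding lstar_shift0 using lzeros_shiftL proots_refl[OF that] by simp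
    qed
    have fa: "filter_mset T (lzeros a) = filter_mset T (proots P)"
      unfolding P(2) zr[OF c] T_def by (rule filter_T_mir)
    have fa': "filter_mset T (lzeros a') = filter_mset T (proots P')"
      unfolding P'(2) zr[OF c'] T_def by (rule filter_T_mir)
    have "filter_mset T (proots M) = filter_mset T (proots P) + filter_mset T (proots P)"
      using RP filter_T_mir[of "proots P"] by (simp add: T_def)
    moreover have "filter_mset T (proots M) = filter_mset T (proots P') + filter_mset T (proots P')"
      using RP' filter_T_mir[of "proots P'"] by (simp add: T_def)
    ultimately have "filter_mset T (proots P) = filter_mset T (proots P')"
      by (metis double_cancel)
    then show ?thesis using i1 fa fa' by (simp add: T_def)
  qed
  have part3: "((lstar (poly_to_laurent p), b) \<in> fibre2 b \<longrightarrow>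
              R = (\<Sum>\<alpha>\<in>#proots p. {#\<alpha>, 1 / cnj \<alpha>#})) \<and>
           (R = (\<Sum>\<alpha>\<in>#proots p. {#\<alpha>, 1 / cnj \<alpha>#}) \<longrightarrow>
              (\<exists>!c. c \<noteq> 0 \<and> (lsmult c (lstar (poly_to_laurent p)), b) \<in> fibre2 b))"
    if hp: "poly p 0 \<noteq> 0" for p :: "complex poly"
  proof -
    have p0: "coeff p 0 \<noteq> 0" using hp by (simp add: poly_0_coeff_0)
    have memG: "(lstar (shiftL 0 Q), b) \<in> fibre2 b \<longleftrightarrow> Q \<in> GG M" for Q
    proof -
      have "(lstar (shiftL 0 Q), b) \<in> fibre2 b \<longleftrightarrow> (\<exists>P\<in>GG M. lstar (shiftL 0 Q) = lstar (shiftL 0 P))"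
        using fibc by (simp add: fibre2_def)
      also have "\<dots> \<longleftrightarrow> Q \<in> GG M" by (auto dest: lstar_inj shiftL0_inj)
      finally show ?thesis .
    qed
    have A: "R = (\<Sum>\<alpha>\<in>#proots p. {#\<alpha>, 1 / cnj \<alpha>#})" if "(lstar (poly_to_laurent p), b) \<in> fibre2 b"
    proof -
      have "p \<in> GG M" using that memG by (simp add: ptl_shiftL)
      then have "proots M = image_mset mir (proots p) + proots p" using GGprops by blast
      then show ?thesis using Rp sum_pairs by simp
    qed
    have B: "\<exists>!c. c \<noteq> 0 \<and> (lsmult c (lstar (poly_to_laurent p)), b) \<in> fibre2 b"
      if hR: "R = (\<Sum>\<alpha>\<in>#proots p. {#\<alpha>, 1 / cnj \<alpha>#})"
    proof -
      have "proots M = image_mset mir (proots p) + proots p" using hR Rp sum_pairs by simp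
      then have u: "\<exists>!d. smult d p \<in> GG M" by (rule GG_unique_scale[OF P00 M_def p0])
      have iff: "(lsmult c (lstar (poly_to_laurent p)), b) \<in> fibre2 b \<longleftrightarrow> smult (cnj c) p \<in> GG M" for c
        by (simp add: ptl_shiftL lsmult_lstar memG)
      obtain d where d: "smult d p \<in> GG M" using u by blast
      have dnz: "d \<noteq> 0" using GG_coeff0[OF d] by auto
      show ?thesis
      proof (rule ex1I[where a = "cnj d"])
        show "cnj d \<noteq> 0 \<and> (lsmult (cnj d) (lstar (poly_to_laurent p)), b) \<in> fibre2 b"
          using dnz d iff by simp
      next
        fix c assume "c \<noteq> 0 \<and> (lsmult c (lstar (poly_to_laurent p)), b) \<in> fibre2 b"
        then have "smult (cnj c) p \<in> GG M" using iff by blast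
        then have "cnj c = d" using u d by blast
        then show "c = cnj d" by auto
      qed
    qed
    show ?thesis using A B by blast
  qed
  show ?thesis using part1 part2 part3 by blast
qed

end
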